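(* Let $(H_i)_{i=0}^\infty = (2^{\alpha_i}3^{\beta_i})_{i=0}^\infty$ be the increasing enumeration of $\mathcal{H}=\{2^\alpha3^\beta : \alpha,\beta\in\mathbb{N}_0\}$, and define $f\colon\mathbb{N}_0\to\{+1,-1\}$ by $f(0)=+1$ and $f(n)=(-1)^{\alpha_i+\beta_i}$ for $n\in\{H_i,H_i+1,\dots,H_{i+1}-1\}$, $i\in\mathbb{N}_0$. Then $f$ is asymptotically $2$-automatic and asymptotically $3$-automatic.
   Context: $\mathbb{N}_0=\{0,1,2,\dots\}$. A property holds for almost all $n\in\mathbb{N}_0$ if the set of $n$ where it fails has upper density $\limsup_{N\to\infty}|\cdot\cap\{0,\dots,N-1\}|/N$ equal to $0$. Sequences $f,g$ are asymptotically equal, $f\simeq g$, if $f(n)=g(n)$ for almost all $n$. The $k$-kernel of $f$ is $\mathcal{N}_k(f) = \{ n \mapsto f(k^\alpha n + r) : \alpha, r \in \mathbb{N}_0,\ r < k^\alpha\}$; $f$ is asymptotically $k$-automatic if $\mathcal{N}_k(f)/{\simeq}$ is finite. *)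

theory Defs
  imports Complex_Main "HOL-Library.Infinite_Set" "HOL-Library.Liminf_Limsup"
    "HOL-Library.Extended_Real"
begin

definition upper_density :: "nat set \<Rightarrow> ereal" where
  "upper_density A = limsup (\<lambda>N. ereal (real (card (A \<inter> {..<N})) / real N))"

definition asym_eq :: "(nat \<Rightarrow> 'a) \<Rightarrow> (nat \<Rightarrow> 'a) \<Rightarrow> bool" where
  "asym_eq f g \<longleftrightarrow> upper_density {n. f n \<noteq> g n} = 0"

definition kernel :: "nat \<Rightarrow> (nat \<Rightarrow> 'a) \<Rightarrow> (nat \<Rightarrow> 'a) set" where
  "kernel k f = {(\<lambda>n. f (k ^ \<alpha> * n + r)) | \<alpha> r. r < k ^ \<alpha>}"

definition asym_automatic :: "nat \<Rightarrow> (nat \<Rightarrow> 'a) \<Rightarrow> bool" where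
  "asym_automatic k f \<longleftrightarrow> finite (kernel k f // {(g, h). asym_eq g h})"

definition hamming :: "nat set" where
  "hamming = {2 ^ a * 3 ^ b | a b. True}"

definition hamH :: "nat \<Rightarrow> nat" where
  "hamH i = enumerate hamming i"

definition hexp_alpha :: "nat \<Rightarrow> nat" where
  "hexp_alpha i = fst (THE (a, b). hamH i = 2 ^ a * 3 ^ b)"

definition hexp_beta :: "nat \<Rightarrow> nat" where
  "hexp_beta i = snd (THE (a, b). hamH i = 2 ^ a * 3 ^ b)"

definition f43 :: "nat \<Rightarrow> int" where
  "f43 n = (if n = 0 then 1 else
     (let i = (THE i. hamH i \<le> n \<and> n < hamH (Suc i)) in (-1) ^ (hexp_alpha i + hexp_beta i)))"

end

theory Submission
  imports Defs "HOL-Analysis.Kronecker_Approximation_Theorem" "HOL-Analysis.Harmonic_Numbers"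
begin

lemma uniq23: "(2::nat)^a * 3^b = 2^c * 3^d \<Longrightarrow> a = c \<and> b = d"
proof (induction a arbitrary: c)
  case 0
  note h = 0
  show ?case
  proof (cases c)
    case 0 then have "(3::nat)^b = 3^d" using h by simp
    then show ?thesis using \<open>c = 0\<close> by (simp add: power_inject_exp)
  next
    case (Suc c') then have "even ((2::nat)^0 * 3^b)" using h by simp
    then show ?thesis by simp
  qed
next
  case (Suc a)
  note h = Suc.prems
  show ?case
  proof (cases c)
    case 0 then have "even ((2::nat)^0 * 3^d)" using h by (metis dvd_mult2 even_numeral power_Suc)
    then show ?thesis by simp
  next
    case (Suc c') then show ?thesis using Suc.IH[of c'] h by simp
  qed
qed

definition kp :: "nat \<Rightarrow> nat \<Rightarrow> bool" where
  "kp k p \<longleftrightarrow> (k = 2 \<and> p = 3) \<or> (k = 3 \<and> p = 2)"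

lemma kp_ge: "kp k p \<Longrightarrow> k \<ge> 2 \<and> p \<ge> 2 \<and> k \<le> 3"
  by (auto simp: kp_def)

lemma uniq_kp: "kp k p \<Longrightarrow> k^a * p^b = k^c * p^d \<Longrightarrow> a = c \<and> b = d"
  unfolding kp_def using uniq23 by (metis mult.commute)

lemma hamming_kp: "kp k p \<Longrightarrow> hamming = {k^x * p^y | x y. True}"
proof -
  assume k: "kp k p"
  show ?thesis
  proof (cases "k = 2")
    case True then have "p = 3" using k by (auto simp: kp_def)
    then show ?thesis using True unfolding hamming_def by simp
  next
    case False then have "k = 3" "p = 2" using k by (auto simp: kp_def)
    have "{(2::nat)^a * 3^b | a b. True} = {3^x * 2^y | x y. True}"
    proof (intro equalityI subsetI)
      fix z assume "z \<in> {(2::nat)^a * 3^b | a b. True}"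
      then obtain a b where "z = 2^a * 3^b" by blast
      then have "z = 3^b * 2^a" by simp
      then show "z \<in> {3^x * 2^y | x y. True}" by blast
    next
      fix z assume "z \<in> {(3::nat)^x * 2^y | x y. True}"
      then obtain a b where "z = 3^a * 2^b" by blast
      then have "z = 2^b * 3^a" by simp
      then show "z \<in> {2^x * 3^y | x y. True}" by blast
    qed
    then show ?thesis unfolding hamming_def using \<open>k = 3\<close> \<open>p = 2\<close> by simp
  qed
qed

lemma ham_in: "kp k p \<Longrightarrow> k^x * p^y \<in> hamming"
  using hamming_kp by blast

lemma ham_pos: "s \<in> hamming \<Longrightarrow> s > 0"
  unfolding hamming_def by auto

lemma infinite_hamming: "infinite hamming"
proof -
  have "range (\<lambda>a. (2::nat)^a) \<subseteq> hamming"
  proof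
    fix z assume "z \<in> range (\<lambda>a. (2::nat)^a)"
    then obtain a where "z = 2^a * 3^0" by auto
    then show "z \<in> hamming" unfolding hamming_def by blast
  qed
  moreover have "infinite (range (\<lambda>a. (2::nat)^a))"
    by (rule range_inj_infinite) (simp add: inj_def power_inject_exp)
  ultimately show ?thesis using infinite_super by blast
qed

lemma sm_hamH: "strict_mono hamH"
  unfolding strict_mono_def hamH_def using infinite_hamming by simp

lemma f43_char:
  assumes k: "kp k p" and n: "n \<ge> 1" and le: "k^x * p^y \<le> n"
    and mx: "\<forall>s\<in>hamming. k^x * p^y < s \<longrightarrow> n < s"
  shows "f43 n = (-1)^(x+y)"
proof -
  obtain a b where ab: "k^x * p^y = 2^a * 3^b" "a + b = x + y"
    using k unfolding kp_def by (metis add.commute mult.commute)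
  have "2^a * 3^b \<in> hamming" unfolding hamming_def by blast
  then obtain i where i: "hamH i = 2^a*3^b" unfolding hamH_def using enumerate_Ex infinite_hamming by blast
  have hs: "hamH (Suc i) \<in> hamming" unfolding hamH_def using enumerate_in_set infinite_hamming by blast
  have "hamH i < hamH (Suc i)" using sm_hamH by (simp add: strict_mono_def)
  then have nlt: "n < hamH (Suc i)" using mx hs i ab by auto
  have the_i: "(THE i. hamH i \<le> n \<and> n < hamH (Suc i)) = i"
  proof (rule the_equality)
    show "hamH i \<le> n \<and> n < hamH (Suc i)" using nlt le i ab by simp
  next
    fix i' assume h: "hamH i' \<le> n \<and> n < hamH (Suc i')"
    show "i' = i"
    proof (rule ccontr)
      assume "i' \<noteq> i"
      then consider "Suc i' \<le> i" | "Suc i \<le> i'" by linarith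
      then show False
      proof cases
        case 1 then have "hamH (Suc i') \<le> hamH i" using sm_hamH strict_mono_less_eq by blast
        then show False using h le i ab by simp
      next
        case 2 then have "hamH (Suc i) \<le> hamH i'" using sm_hamH strict_mono_less_eq by blast
        then show False using h nlt by simp
      qed
    qed
  qed
  have the_ab: "(THE (a', b'). hamH i = 2 ^ a' * 3 ^ b') = (a, b)"
  proof (rule the_equality)
    show "case (a, b) of (a', b') \<Rightarrow> hamH i = 2 ^ a' * 3 ^ b'" using i by simp
  next
    fix z assume z: "case z of (a', b') \<Rightarrow> hamH i = 2 ^ a' * 3 ^ b'"
    obtain a' b' where zz: "z = (a', b')" by (cases z)
    then have "2^a * 3^b = (2::nat) ^ a' * 3 ^ b'" using z i by simp
    then show "z = (a, b)" using zz uniq23 by metis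
  qed
  have "f43 n = (-1)^(hexp_alpha i + hexp_beta i)" using n the_i unfolding f43_def by (simp add: Let_def)
  also have "hexp_alpha i + hexp_beta i = a + b" unfolding hexp_alpha_def hexp_beta_def the_ab by simp
  finally show ?thesis using ab by simp
qed

lemma exists_L:
  assumes k: "kp k p" and n: "n \<ge> 1"
  shows "\<exists>x y. k^x * p^y \<le> n \<and> (\<forall>s\<in>hamming. k^x * p^y < s \<longrightarrow> n < s)"
proof -
  define A where "A = hamming \<inter> {..n}"
  have "finite A" "A \<noteq> {}" unfolding A_def using n ham_in[OF k, of 0 0] by auto
  then have "Max A \<in> A" by simp
  then have "Max A \<in> {k^x * p^y | x y. True}" unfolding A_def using hamming_kp[OF k] by simp
  then obtain x y where m: "Max A = k^x*p^y" by blast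
  have "\<forall>s\<in>hamming. k^x * p^y < s \<longrightarrow> n < s"
    using Max_ge[OF \<open>finite A\<close>] m unfolding A_def by (metis IntI atMost_iff leD not_le)
  then show ?thesis using \<open>Max A \<in> A\<close> m unfolding A_def by auto
qed


definition negl :: "nat set \<Rightarrow> bool" where
  "negl A \<longleftrightarrow> (\<forall>\<delta>>0. \<exists>N0. \<forall>N\<ge>N0. real (card (A \<inter> {..<N})) \<le> \<delta> * real N)"

lemma negl_tendsto: "negl A \<longleftrightarrow> (\<lambda>N. real (card (A \<inter> {..<N})) / real N) \<longlonglongrightarrow> 0"
proof
  assume h: "negl A"
  show "(\<lambda>N. real (card (A \<inter> {..<N})) / real N) \<longlonglongrightarrow> 0"
  proof (rule LIMSEQ_I)
    fix r :: real assume r: "r > 0"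
    obtain N0 where N0: "\<forall>N\<ge>N0. real (card (A \<inter> {..<N})) \<le> (r/2) * real N"
      using h r unfolding negl_def by (meson half_gt_zero)
    show "\<exists>no. \<forall>n\<ge>no. norm (real (card (A \<inter> {..<n})) / real n - 0) < r"
    proof (intro exI allI impI)
      fix n assume n: "n \<ge> max N0 1"
      then have "real (card (A \<inter> {..<n})) \<le> (r/2) * real n" using N0 by simp
      moreover have "real n > 0" using n by simp
      ultimately have "real (card (A \<inter> {..<n})) / real n \<le> r/2" by (simp add: divide_simps)
      moreover have "norm (real (card (A \<inter> {..<n})) / real n - 0) = real (card (A \<inter> {..<n})) / real n" by simp
      ultimately show "norm (real (card (A \<inter> {..<n})) / real n - 0) < r" using r by linarith
    qed
  qed
next
  assume h: "(\<lambda>N. real (card (A \<inter> {..<N})) / real N) \<longlonglongrightarrow> 0"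
  show "negl A" unfolding negl_def
  proof (intro allI impI)
    fix d :: real assume d: "d > 0"
    obtain no where no: "\<forall>n\<ge>no. norm (real (card (A \<inter> {..<n})) / real n - 0) < d"
      using LIMSEQ_D[OF h d] by blast
    show "\<exists>N0. \<forall>N\<ge>N0. real (card (A \<inter> {..<N})) \<le> d * real N"
    proof (intro exI allI impI)
      fix N assume N: "N \<ge> max no 1"
      then have "real (card (A \<inter> {..<N})) / real N < d" using no by auto
      moreover have "real N > 0" using N by simp
      ultimately show "real (card (A \<inter> {..<N})) \<le> d * real N" by (simp add: divide_simps)
    qed
  qed
qed

lemma negl_iff: "upper_density A = 0 \<longleftrightarrow> negl A"
proof -
  define x where "x = (\<lambda>N. real (card (A \<inter> {..<N})) / real N)"
  have "limsup (\<lambda>N. ereal (x N)) = 0 \<longleftrightarrow> x \<longlonglongrightarrow> 0"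
  proof
    assume l: "limsup (\<lambda>N. ereal (x N)) = 0"
    have "0 \<le> liminf (\<lambda>N. ereal (x N))"
      by (rule Liminf_bounded) (simp add: x_def)
    moreover have "liminf (\<lambda>N. ereal (x N)) \<le> limsup (\<lambda>N. ereal (x N))"
      by (rule Liminf_le_Limsup) simp
    ultimately have "liminf (\<lambda>N. ereal (x N)) = 0" using l by simp
    then have "((\<lambda>N. ereal (x N)) \<longlongrightarrow> ereal 0) sequentially"
      by (intro Liminf_eq_Limsup) (use l in \<open>simp_all add: zero_ereal_def\<close>)
    then show "x \<longlonglongrightarrow> 0" by simp
  next
    assume "x \<longlonglongrightarrow> 0"
    then have "((\<lambda>N. ereal (x N)) \<longlongrightarrow> ereal 0) sequentially" by simp
    then have "limsup (\<lambda>N. ereal (x N)) = ereal 0"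
      by (intro lim_imp_Limsup) simp_all
    then show "limsup (\<lambda>N. ereal (x N)) = 0" by (simp add: zero_ereal_def)
  qed
  then show ?thesis unfolding upper_density_def negl_tendsto x_def by simp
qed

lemma negl_subset: "A \<subseteq> B \<Longrightarrow> negl B \<Longrightarrow> negl A"
proof -
  assume s: "A \<subseteq> B" and b: "negl B"
  have c: "card (A \<inter> {..<N}) \<le> card (B \<inter> {..<N})" for N
    by (rule card_mono) (use s in auto)
  show ?thesis unfolding negl_def
  proof (intro allI impI)
    fix d :: real assume "d > 0"
    then obtain N0 where "\<forall>N\<ge>N0. real (card (B \<inter> {..<N})) \<le> d * real N" using b negl_def by blast
    then show "\<exists>N0. \<forall>N\<ge>N0. real (card (A \<inter> {..<N})) \<le> d * real N"
      using c by (meson of_nat_le_iff order_trans)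
  qed
qed

lemma negl_Un: "negl A \<Longrightarrow> negl B \<Longrightarrow> negl (A \<union> B)"
proof -
  assume a: "negl A" and b: "negl B"
  have c: "card ((A \<union> B) \<inter> {..<N}) \<le> card (A \<inter> {..<N}) + card (B \<inter> {..<N})" for N
    by (metis Int_Un_distrib2 card_Un_le)
  show ?thesis unfolding negl_def
  proof (intro allI impI)
    fix d :: real assume "d > 0"
    then have "d/2 > 0" by simp
    then obtain N1 N2 where "\<forall>N\<ge>N1. real (card (A \<inter> {..<N})) \<le> d/2 * real N"
       "\<forall>N\<ge>N2. real (card (B \<inter> {..<N})) \<le> d/2 * real N" using a b negl_def by meson
    then have "\<forall>N\<ge>max N1 N2. real (card ((A \<union> B) \<inter> {..<N})) \<le> d * real N"
    proof (intro allI impI)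
      fix N assume "N \<ge> max N1 N2"
      then have "real (card (A \<inter> {..<N})) + real (card (B \<inter> {..<N})) \<le> d * real N"
        using \<open>\<forall>N\<ge>N1. _\<close> \<open>\<forall>N\<ge>N2. _\<close> by fastforce
      moreover have "real (card ((A \<union> B) \<inter> {..<N})) \<le> real (card (A \<inter> {..<N})) + real (card (B \<inter> {..<N}))"
        using c[of N] by linarith
      ultimately show "real (card ((A \<union> B) \<inter> {..<N})) \<le> d * real N" by linarith
    qed
    then show "\<exists>N0. \<forall>N\<ge>N0. real (card ((A \<union> B) \<inter> {..<N})) \<le> d * real N" by blast
  qed
qed

lemma negl_empty: "negl {}"
  unfolding negl_def by auto

lemma negl_preimage:
  assumes a: "negl A" and k: "k \<ge> 1"
  shows "negl {n. k * n + r \<in> A}"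
  unfolding negl_def
proof (intro allI impI)
  fix d :: real assume d: "d > 0"
  define d' where "d' = d / real (k + r)"
  have "d' > 0" using d k by (simp add: d'_def)
  then obtain N0 where N0: "\<forall>N\<ge>N0. real (card (A \<inter> {..<N})) \<le> d' * real N" using a negl_def by blast
  show "\<exists>N0. \<forall>N\<ge>N0. real (card ({n. k * n + r \<in> A} \<inter> {..<N})) \<le> d * real N"
  proof (intro exI allI impI)
    fix N assume N: "N \<ge> max N0 1"
    have "(\<lambda>n. k * n + r) ` ({n. k * n + r \<in> A} \<inter> {..<N}) \<subseteq> A \<inter> {..<k*N+r}"
      using k by auto
    moreover have "inj_on (\<lambda>n. k * n + r) ({n. k * n + r \<in> A} \<inter> {..<N})"
      using k by (auto simp: inj_on_def)
    ultimately have "card ({n. k * n + r \<in> A} \<inter> {..<N}) \<le> card (A \<inter> {..<k*N+r})"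
      by (metis card_image card_mono finite_Int finite_lessThan)
    also have "k*N+r \<ge> N0" using N k by (metis le_add1 le_trans max.boundedE mult_le_mono1 mult_1)
    then have "real (card (A \<inter> {..<k*N+r})) \<le> d' * real (k*N+r)" using N0 by blast
    also have "d' * real (k*N+r) \<le> d' * real ((k+r)*N)"
    proof -
      have "r \<le> r * N" using N by simp
      then have "k*N+r \<le> (k+r)*N" by (simp add: algebra_simps)
      then have "real (k*N+r) \<le> real ((k+r)*N)" by (rule of_nat_mono)
      then show ?thesis using \<open>d' > 0\<close> by (intro mult_left_mono) auto
    qed
    also have "d' * real ((k+r)*N) = d * real N" using k by (simp add: d'_def)
    finally show "real (card ({n. k * n + r \<in> A} \<inter> {..<N})) \<le> d * real N" by simp
  qed
qed

lemma asym_eq_negl: "asym_eq f g \<longleftrightarrow> negl {n. f n \<noteq> g n}"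
  unfolding asym_eq_def negl_iff ..

lemma asym_refl: "asym_eq f f"
  unfolding asym_eq_negl by (simp add: negl_empty)

lemma asym_sym: "asym_eq f g \<Longrightarrow> asym_eq g f"
  unfolding asym_eq_negl by (metis (mono_tags) Collect_cong)

lemma asym_trans: "asym_eq f g \<Longrightarrow> asym_eq g h \<Longrightarrow> asym_eq f h"
proof -
  assume "asym_eq f g" "asym_eq g h"
  then have "negl ({n. f n \<noteq> g n} \<union> {n. g n \<noteq> h n})" unfolding asym_eq_negl by (rule negl_Un)
  moreover have "{n. f n \<noteq> h n} \<subseteq> {n. f n \<noteq> g n} \<union> {n. g n \<noteq> h n}" by auto
  ultimately show ?thesis unfolding asym_eq_negl using negl_subset by blast
qed


lemma card_interval:
  shows "finite {n::nat. a \<le> real n \<and> real n < b}"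
    and "real (card {n::nat. a \<le> real n \<and> real n < b}) \<le> max 0 (b - a) + 1"
proof -
  have sub: "{n::nat. a \<le> real n \<and> real n < b} \<subseteq> {nat \<lceil>a\<rceil>..<nat \<lceil>b\<rceil>}"
  proof
    fix n assume "n \<in> {n::nat. a \<le> real n \<and> real n < b}"
    then have "a \<le> real n" "real n < b" by auto
    have c1: "\<lceil>a\<rceil> \<le> int n" using \<open>a \<le> real n\<close> by (simp add: ceiling_le_iff)
    have c2: "int n < \<lceil>b\<rceil>" using \<open>real n < b\<close> by (simp add: less_ceiling_iff)
    have "nat \<lceil>a\<rceil> \<le> n" using c1 by (simp add: nat_le_iff)
    moreover have "n < nat \<lceil>b\<rceil>" using c2 by (simp add: zless_nat_eq_int_zless)
    ultimately show "n \<in> {nat \<lceil>a\<rceil>..<nat \<lceil>b\<rceil>}" by simp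
  qed
  then show "finite {n::nat. a \<le> real n \<and> real n < b}" using finite_subset by blast
  have "card {n::nat. a \<le> real n \<and> real n < b} \<le> nat \<lceil>b\<rceil> - nat \<lceil>a\<rceil>"
    using card_mono[OF _ sub] by simp
  moreover have "real (nat \<lceil>b\<rceil> - nat \<lceil>a\<rceil>) \<le> max 0 (b - a) + 1"
  proof (cases "nat \<lceil>b\<rceil> \<le> nat \<lceil>a\<rceil>")
    case True then show ?thesis by simp
  next
    case False
    then have "real (nat \<lceil>b\<rceil> - nat \<lceil>a\<rceil>) = real (nat \<lceil>b\<rceil>) - real (nat \<lceil>a\<rceil>)"
      by (intro of_nat_diff) linarith
    also have "\<dots> \<le> of_int \<lceil>b\<rceil> - of_int \<lceil>a\<rceil>" using False by auto
    also have "\<dots> < b + 1 - a" using ceiling_correct[of b] ceiling_correct[of a] by linarith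
    finally show ?thesis by simp
  qed
  ultimately show "real (card {n::nat. a \<le> real n \<and> real n < b}) \<le> max 0 (b - a) + 1"
    by (meson of_nat_le_iff order_trans)
qed

lemma geo: "(p::nat) \<ge> 2 \<Longrightarrow> (\<Sum>y<Suc M. p^y) \<le> 2 * p^M"
proof (induction M)
  case 0 then show ?case by simp
next
  case (Suc M)
  have "(\<Sum>y<Suc (Suc M). p^y) = (\<Sum>y<Suc M. p^y) + p^Suc M" by simp
  also have "\<dots> \<le> 2*p^M + p^Suc M" using Suc by simp
  also have "2*p^M \<le> p^Suc M" using Suc.prems by simp
  finally show ?case by simp
qed

lemma count_E:
  assumes k: "kp k p" and r: "r < k" and e: "\<epsilon> \<ge> 0"
  shows "real (card ({n. \<exists>y. p^y \<le> k*n+r \<and> real (k*n) < (1+\<epsilon>) * real (p^y)} \<inter> {..<N}))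
     \<le> 2 * \<epsilon> * real (k*N+k) + 2 * (2 * ln (real (k*N+k)) + 1)"
proof -
  have k2: "k \<ge> 2" "p \<ge> 2" using kp_ge[OF k] by auto
  define X where "X = k*N+k"
  define Y where "Y = {y. p^y < X}"
  define I where "I = (\<lambda>y. {n. p^y \<le> k*n+r \<and> real (k*n) < (1+\<epsilon>) * real (p^y)})"
  have Ysub: "Y \<subseteq> {..<X}"
  proof
    fix y assume "y \<in> Y"
    then have "p^y < X" by (simp add: Y_def)
    moreover have "y < p^y" using k2 by (metis less_exp less_le_trans power_mono zero_le_numeral)
    ultimately show "y \<in> {..<X}" by simp
  qed
  then have finY: "finite Y" using finite_subset by blast
  have cover: "{n. \<exists>y. p^y \<le> k*n+r \<and> real (k*n) < (1+\<epsilon>) * real (p^y)} \<inter> {..<N} \<subseteq> (\<Union>y\<in>Y. I y)"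
  proof
    fix n assume "n \<in> {n. \<exists>y. p^y \<le> k*n+r \<and> real (k*n) < (1+\<epsilon>) * real (p^y)} \<inter> {..<N}"
    then obtain y where y: "p^y \<le> k*n+r" "real (k*n) < (1+\<epsilon>) * real (p^y)" "n < N" by auto
    have "k*(n+1) \<le> k*N" using y(3) by (intro mult_left_mono) auto
    then have "k*n + r < k*N + k" using r by (simp add: algebra_simps)
    then have "y \<in> Y" using y(1) by (simp add: Y_def X_def)
    then show "n \<in> (\<Union>y\<in>Y. I y)" using y by (auto simp: I_def)
  qed
  have Ibound: "finite (I y) \<and> real (card (I y)) \<le> \<epsilon> * real (p^y) + 2" for y
  proof -
    define a where "a = (real (p^y) - real r) / real k"
    define b where "b = (1+\<epsilon>) * real (p^y) / real k"
    have kpos: "real k > 0" using k2 by simp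
    have "I y \<subseteq> {n::nat. a \<le> real n \<and> real n < b}"
    proof
      fix n assume "n \<in> I y"
      then have h: "p^y \<le> k*n+r" "real (k*n) < (1+\<epsilon>) * real (p^y)" by (auto simp: I_def)
      from h(1) have "real (p^y) \<le> real k * real n + real r" by (metis of_nat_add of_nat_le_iff of_nat_mult)
      then have "real (p^y) - real r \<le> real n * real k" by (simp add: mult.commute)
      then have "a \<le> real n" unfolding a_def by (subst pos_divide_le_eq[OF kpos])
      moreover have "real n * real k < (1+\<epsilon>) * real (p^y)" using h(2) by (simp add: mult.commute)
      then have "real n < b" unfolding b_def by (subst pos_less_divide_eq[OF kpos])
      ultimately show "n \<in> {n::nat. a \<le> real n \<and> real n < b}" by simp
    qed
    note sub = this
    have fin: "finite (I y)" by (rule finite_subset[OF sub card_interval(1)])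
    have "card (I y) \<le> card {n::nat. a \<le> real n \<and> real n < b}"
      by (rule card_mono[OF card_interval(1) sub])
    then have "real (card (I y)) \<le> real (card {n::nat. a \<le> real n \<and> real n < b})" by (rule of_nat_mono)
    then have c: "real (card (I y)) \<le> max 0 (b - a) + 1" using card_interval(2)[of a b] by linarith
    have "b - a = ((1+\<epsilon>) * real (p^y) - (real (p^y) - real r)) / real k"
      unfolding a_def b_def by (rule diff_divide_distrib[symmetric])
    also have "\<dots> = (\<epsilon> * real (p^y) + real r) / real k"
      by (rule arg_cong[where f="\<lambda>z. z / real k"]) (simp add: algebra_simps)
    also have "\<dots> = \<epsilon> * real (p^y) / real k + real r / real k" by (simp add: add_divide_distrib)
    finally have e1: "b - a = \<epsilon> * real (p^y) / real k + real r / real k" .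
    have e2: "\<epsilon> * real (p^y) / real k \<le> \<epsilon> * real (p^y)"
    proof -
      have nn: "0 \<le> \<epsilon> * real (p^y)" using e by simp
      have "\<epsilon> * real (p^y) / real k \<le> \<epsilon> * real (p^y) / 1" using nn k2 by (intro divide_left_mono) auto
      then show ?thesis by simp
    qed
    have e3: "real r / real k \<le> 1" using r kpos by simp
    have "b - a \<le> \<epsilon> * real (p^y) + 1" using e1 e2 e3 by linarith
    moreover have "0 \<le> \<epsilon> * real (p^y) + 1" using e by (simp add: zero_le_mult_iff)
    ultimately have "max 0 (b - a) \<le> \<epsilon> * real (p^y) + 1" by simp
    then have "real (card (I y)) \<le> \<epsilon> * real (p^y) + 2" using c by linarith
    then show ?thesis using fin by simp
  qed
  have "card ({n. \<exists>y. p^y \<le> k*n+r \<and> real (k*n) < (1+\<epsilon>) * real (p^y)} \<inter> {..<N}) \<le> card (\<Union>y\<in>Y. I y)"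
  proof -
    have "finite (\<Union>y\<in>Y. I y)" using finY Ibound by blast
    then show ?thesis by (rule card_mono[OF _ cover])
  qed
  also have "\<dots> \<le> (\<Sum>y\<in>Y. card (I y))" by (rule card_UN_le[OF finY])
  finally have c0: "card ({n. \<exists>y. p^y \<le> k*n+r \<and> real (k*n) < (1+\<epsilon>) * real (p^y)} \<inter> {..<N})
      \<le> (\<Sum>y\<in>Y. card (I y))" .
  have sc: "real (\<Sum>y\<in>Y. card (I y)) = (\<Sum>y\<in>Y. real (card (I y)))" by (rule of_nat_sum)
  have c1: "real (card ({n. \<exists>y. p^y \<le> k*n+r \<and> real (k*n) < (1+\<epsilon>) * real (p^y)} \<inter> {..<N}))
      \<le> (\<Sum>y\<in>Y. real (card (I y)))" using of_nat_mono[where 'a=real, OF c0] sc by linarith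
  also have "\<dots> \<le> (\<Sum>y\<in>Y. \<epsilon> * real (p^y) + 2)" using Ibound by (intro sum_mono) auto
  also have "\<dots> = \<epsilon> * real (\<Sum>y\<in>Y. p^y) + 2 * real (card Y)"
    by (simp add: sum.distrib sum_distrib_left)
  finally have c2: "real (card ({n. \<exists>y. p^y \<le> k*n+r \<and> real (k*n) < (1+\<epsilon>) * real (p^y)} \<inter> {..<N}))
      \<le> \<epsilon> * real (\<Sum>y\<in>Y. p^y) + 2 * real (card Y)" .
  have "0 \<in> Y" unfolding Y_def X_def using k2 by simp
  define M where "M = Max Y"
  have "M \<in> Y" unfolding M_def using finY \<open>0 \<in> Y\<close> by (intro Max_in) auto
  have "Y \<subseteq> {..<Suc M}" unfolding M_def using finY by (auto simp: less_Suc_eq_le)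
  then have "(\<Sum>y\<in>Y. p^y) \<le> (\<Sum>y<Suc M. p^y)" by (intro sum_mono2) auto
  also have "\<dots> \<le> 2 * p^M" using geo k2 by simp
  also have "\<dots> \<le> 2 * X" using \<open>M \<in> Y\<close> unfolding Y_def by simp
  finally have s1n: "(\<Sum>y\<in>Y. p^y) \<le> 2 * X" .
  have s1: "real (\<Sum>y\<in>Y. p^y) \<le> 2 * real X" using of_nat_mono[where 'a=real, OF s1n] by simp
  have "X > 0" unfolding X_def using k2 by simp
  then have Xpos: "real X > 0" by simp
  have Ysub2: "Y \<subseteq> {..<nat \<lceil>2 * ln (real X)\<rceil>}"
  proof
    fix y assume "y \<in> Y"
    then have "p^y < X" by (simp add: Y_def)
    moreover have "2^y \<le> p^y" using k2 by (simp add: power_mono)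
    ultimately have "real (2^y) < real X" by linarith
    then have "ln (2^y) < ln (real X)" using Xpos by simp
    then have "real y * ln 2 < ln (real X)" by (simp add: ln_realpow)
    moreover have "real y * (1/2) \<le> real y * ln 2" using ln2_ge_two_thirds by (intro mult_left_mono) auto
    ultimately have "real y < 2 * ln (real X)" by linarith
    then have "int y < \<lceil>2 * ln (real X)\<rceil>" by (simp add: less_ceiling_iff)
    then show "y \<in> {..<nat \<lceil>2 * ln (real X)\<rceil>}" by (simp add: zless_nat_eq_int_zless)
  qed
  have "card Y \<le> nat \<lceil>2 * ln (real X)\<rceil>" using card_mono[OF _ Ysub2] by simp
  then have s2: "real (card Y) \<le> 2 * ln (real X) + 1"
  proof -
    assume a: "card Y \<le> nat \<lceil>2 * ln (real X)\<rceil>"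
    have "X \<ge> 1" unfolding X_def using k2 by simp
    then have "ln (real X) \<ge> 0" by simp
    then have "real (nat \<lceil>2 * ln (real X)\<rceil>) \<le> 2 * ln (real X) + 1" by linarith
    then show ?thesis using a by (meson of_nat_le_iff order_trans)
  qed
  have "\<epsilon> * real (\<Sum>y\<in>Y. p^y) \<le> \<epsilon> * (2 * real X)" using s1 e by (intro mult_left_mono) auto
  then have t1: "\<epsilon> * real (\<Sum>y\<in>Y. p^y) \<le> 2 * \<epsilon> * real X" by simp
  have t2: "2 * real (card Y) \<le> 2 * (2 * ln (real X) + 1)" using s2 by simp
  have "\<epsilon> * real (\<Sum>y\<in>Y. p^y) + 2 * real (card Y) \<le> 2 * \<epsilon> * real X + 2 * (2 * ln (real X) + 1)"
    using add_mono[OF t1 t2] .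
  then have "real (card ({n. \<exists>y. p^y \<le> k*n+r \<and> real (k*n) < (1+\<epsilon>) * real (p^y)} \<inter> {..<N}))
     \<le> 2 * \<epsilon> * real X + 2 * (2 * ln (real X) + 1)" using c2 by (rule order_trans[rotated])
  then show ?thesis by (simp only: X_def)
qed


lemma approx:
  assumes k: "kp k p" and e: "\<epsilon> > 0"
  shows "\<exists>i j. real (p^j) < real (k^i) \<and> real (k^i) \<le> (1+\<epsilon>) * real (p^j)"
proof -
  have k2: "k \<ge> 2" "p \<ge> 2" using kp_ge[OF k] by auto
  have lk: "ln (real k) > 0" and lp: "ln (real p) > 0" using k2 by auto
  define \<theta> where "\<theta> = ln (real k) / ln (real p)"
  have irr: "\<theta> \<notin> \<rat>"
  proof
    assume "\<theta> \<in> \<rat>"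
    then obtain a b :: int where b: "b > 0" and ab: "\<theta> = of_int a / of_int b"
      by (rule Rats_cases') blast
    have "\<theta> > 0" unfolding \<theta>_def using lk lp by simp
    then have a: "a > 0" using ab b by (simp add: zero_less_divide_iff)
    have "real_of_int b * ln (real k) = real_of_int a * ln (real p)"
      using ab b lp unfolding \<theta>_def by (simp add: field_simps)
    then have "real (nat b) * ln (real k) = real (nat a) * ln (real p)" using a b by simp
    then have "ln (real (k ^ nat b)) = ln (real (p ^ nat a))" by (simp add: ln_realpow)
    then have "real (k ^ nat b) = real (p ^ nat a)" using k2 by (subst (asm) ln_inj_iff) auto
    then have "k ^ nat b * p^0 = k^0 * p ^ nat a" by (simp only: of_nat_eq_iff) simp
    then have "nat b = 0" using uniq_kp[OF k] by blast
    then show False using b by simp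
  qed
  define \<delta> where "\<delta> = min 1 (ln (1+\<epsilon>) / ln (real p))"
  have dpos: "\<delta> > 0" unfolding \<delta>_def using e lp by simp
  have d1: "\<delta> \<le> 1" unfolding \<delta>_def by simp
  have h1: "0 \<le> \<delta>/2" "\<delta>/2 \<le> 1" "\<delta>/2 > 0" using dpos d1 by auto
  obtain i where i: "i > 0" "\<bar>frac (real i * \<theta>) - \<delta>/2\<bar> < \<delta>/2"
    using Kronecker_approx_1_explicit[OF irr h1(1) h1(2) h1(3)] by blast
  define \<phi> where "\<phi> = frac (real i * \<theta>)"
  have "\<bar>\<phi> - \<delta>/2\<bar> < \<delta>/2" using i(2) unfolding \<phi>_def .
  then have "\<phi> - \<delta>/2 < \<delta>/2 \<and> -(\<phi> - \<delta>/2) < \<delta>/2" by (simp only: abs_less_iff)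
  then have phi: "0 < \<phi>" "\<phi> < \<delta>" by linarith+
  have th0: "real i * \<theta> \<ge> 0" unfolding \<theta>_def using lk lp by simp
  define j where "j = nat \<lfloor>real i * \<theta>\<rfloor>"
  have jj: "real i * \<theta> = real j + \<phi>" unfolding j_def \<phi>_def frac_def using th0 by simp
  have Ki: "real (k^i) = exp (real i * ln (real k))" using k2 by (simp add: exp_of_nat_mult)
  have Pj: "real (p^j) = exp (real j * ln (real p))" using k2 by (simp add: exp_of_nat_mult)
  have "real i * ln (real k) = (real i * \<theta>) * ln (real p)" unfolding \<theta>_def using lp by simp
  also have "\<dots> = real j * ln (real p) + \<phi> * ln (real p)" unfolding jj by (simp add: algebra_simps)
  finally have "real (k^i) = real (p^j) * exp (\<phi> * ln (real p))" unfolding Ki Pj by (simp add: exp_add)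
  moreover have "exp (\<phi> * ln (real p)) > 1" using phi lp by simp
  moreover have "exp (\<phi> * ln (real p)) \<le> 1 + \<epsilon>"
  proof -
    have "\<phi> * ln (real p) \<le> \<delta> * ln (real p)" using phi lp by simp
    also have "\<delta> * ln (real p) \<le> ln (1+\<epsilon>)" unfolding \<delta>_def using lp
      by (simp add: min_def field_simps)
    finally have "exp (\<phi> * ln (real p)) \<le> exp (ln (1+\<epsilon>))" by simp
    then show ?thesis using e by simp
  qed
  moreover have "real (p^j) > 0" using k2 by simp
  ultimately have "real (p^j) < real (k^i) \<and> real (k^i) \<le> (1+\<epsilon>) * real (p^j)"
    by (simp add: mult.commute)
  then show ?thesis by blast
qed


lemma bad_incl:
  assumes k: "kp k p" and r: "r < k"
    and ij: "real (p^j) < real (k^i)" "real (k^i) \<le> (1+\<epsilon>) * real (p^j)"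
  shows "{n. f43 (k*n+r) \<noteq> - f43 n} \<subseteq> {..<p^j} \<union> {n. \<exists>y. p^y \<le> k*n+r \<and> real (k*n) < (1+\<epsilon>) * real (p^y)}"
proof
  fix n assume "n \<in> {n. f43 (k*n+r) \<noteq> - f43 n}"
  then have bad: "f43 (k*n+r) \<noteq> - f43 n" by simp
  have k2: "k \<ge> 2" "p \<ge> 2" using kp_ge[OF k] by auto
  show "n \<in> {..<p^j} \<union> {n. \<exists>y. p^y \<le> k*n+r \<and> real (k*n) < (1+\<epsilon>) * real (p^y)}"
  proof (cases "n < p^j")
    case True then show ?thesis by simp
  next
    case False
    then have nj: "p^j \<le> n" by simp
    have "p^j \<ge> 1" using k2 by simp
    then have n1: "n \<ge> 1" using nj by simp
    obtain x y where m: "k^x * p^y \<le> n" and mx: "\<forall>s\<in>hamming. k^x * p^y < s \<longrightarrow> n < s"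
      using exists_L[OF k n1] by blast
    have fn: "f43 n = (-1)^(x+y)" by (rule f43_char[OF k n1 m mx])
    define m0 where "m0 = k^x * p^y"
    have m0pos: "m0 > 0" unfolding m0_def using k2 by simp
    have km: "k^(Suc x) * p^y = k * m0" unfolding m0_def by simp
    have "m0 \<le> n" using m m0_def by simp
    then have "k*m0 \<le> k*n" by simp
    then have kmn: "k^(Suc x) * p^y \<le> k*n+r" unfolding km by linarith
    have "k*n \<ge> n" using k2 by simp
    then have kn1: "k*n+r \<ge> 1" using n1 by linarith
    have mx': "\<forall>s\<in>hamming. m0 < s \<longrightarrow> n < s" using mx unfolding m0_def .
    have "\<not> (\<forall>s\<in>hamming. k^(Suc x) * p^y < s \<longrightarrow> k*n+r < s)"
    proof
      assume "\<forall>s\<in>hamming. k^(Suc x) * p^y < s \<longrightarrow> k*n+r < s"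
      then have "f43 (k*n+r) = (-1)^(Suc x + y)" by (rule f43_char[OF k kn1 kmn])
      then show False using bad fn by simp
    qed
    then obtain s where s0: "s \<in> hamming" "k^(Suc x) * p^y < s" "\<not> (k*n+r < s)" by blast
    have s: "s \<in> hamming" "k * m0 < s" "s \<le> k*n+r" using s0 unfolding km by auto
    have "s \<in> {k^x * p^y | x y. True}" using s(1) hamming_kp[OF k] by simp
    then obtain x' y' where s': "s = k^x' * p^y'" by blast
    have x'0: "x' = 0"
    proof (rule ccontr)
      assume "x' \<noteq> 0"
      then obtain x'' where x'': "x' = Suc x''" by (cases x') auto
      define t where "t = k^x'' * p^y'"
      have st: "s = k * t" unfolding s' x'' t_def by simp
      have "t \<in> hamming" unfolding t_def by (rule ham_in[OF k])
      moreover have "m0 < t" using s(2) st by simp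
      ultimately have "n < t" using mx' by blast
      then have "k*(n+1) \<le> k*t" by (intro mult_left_mono) auto
      moreover have "k*(n+1) = k*n + k" by simp
      ultimately show False using s(3) st r by linarith
    qed
    then have sp: "s = p^y'" using s' by simp
    have "k * m0 \<in> hamming" unfolding km[symmetric] by (rule ham_in[OF k])
    moreover have "m0 < k * m0" using m0pos k2 by simp
    ultimately have "n < k * m0" using mx' by blast
    then have "p^j < p^y'" using nj s(2) sp by linarith
    then have jy: "j < y'" using k2 by (simp add: power_less_imp_less_exp)
    define t where "t = k^i * p^(y'-j)"
    have pjn: "p^y' = p^j * p^(y'-j)" using jy by (simp add: power_add[symmetric])
    have pj: "real (p^y') = real (p^j) * real (p^(y'-j))" by (simp only: pjn of_nat_mult)
    have ppos: "real (p^(y'-j)) > 0" using k2 by simp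
    have t1: "real (p^y') < real t" unfolding t_def pj using ij(1) ppos by simp
    have t2: "real t \<le> (1+\<epsilon>) * real (p^y')" unfolding t_def pj using ij(2) ppos
      by (simp add: mult.assoc)
    have i0: "i \<noteq> 0"
    proof
      assume "i = 0"
      then have "real (p^j) < 1" using ij(1) by simp
      moreover have "real (p^j) \<ge> 1" using k2 by simp
      ultimately show False by simp
    qed
    then obtain i' where i': "i = Suc i'" by (cases i) auto
    define u where "u = k^i' * p^(y'-j)"
    have tu: "t = k * u" unfolding t_def u_def i' by simp
    have "u \<in> hamming" unfolding u_def by (rule ham_in[OF k])
    moreover have "p^y' < t" using t1 by (simp only: of_nat_less_iff)
    then have "k * m0 < k * u" using tu s(2) sp by linarith
    then have "m0 < u" by simp
    ultimately have "n < u" using mx' by blast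
    then have "k * n < t" unfolding tu using k2 by simp
    then have "real (k*n) < real t" by (simp only: of_nat_less_iff)
    then have "real (k*n) < (1+\<epsilon>) * real (p^y')" using t2 by linarith
    moreover have "p^y' \<le> k*n+r" using s(3) sp by simp
    ultimately show ?thesis by blast
  qed
qed

lemma arith_aux:
  fixes cd P cE A L l6 lN dN :: real
  shows "cd \<le> P + cE \<Longrightarrow> cE \<le> A + 2*(2*L + 1) \<Longrightarrow> A \<le> dN/2 \<Longrightarrow> L \<le> l6 + lN \<Longrightarrow>
    lN \<le> dN/16 \<Longrightarrow> P + 4*l6 + 2 \<le> dN/4 \<Longrightarrow> cd \<le> dN"
proof -
  assume a: "cd \<le> P + cE" "cE \<le> A + 2*(2*L + 1)" "A \<le> dN/2" "L \<le> l6 + lN"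
    "lN \<le> dN/16" "P + 4*l6 + 2 \<le> dN/4"
  show ?thesis using a by argo
qed

lemma main:
  assumes k: "kp k p" and r: "r < k"
  shows "negl {n. f43 (k*n+r) \<noteq> - f43 n}"
  unfolding negl_def
proof (intro allI impI)
  fix \<delta> :: real assume d: "\<delta> > 0"
  have k2: "k \<ge> 2" "p \<ge> 2" "k \<le> 3" using kp_ge[OF k] by auto
  define \<epsilon> where "\<epsilon> = \<delta> / (8 * real k)"
  have e: "\<epsilon> > 0" unfolding \<epsilon>_def using d k2 by simp
  obtain i j where ij: "real (p^j) < real (k^i)" "real (k^i) \<le> (1+\<epsilon>) * real (p^j)"
    using approx[OF k e] by blast
  define E where "E = {n. \<exists>y. p^y \<le> k*n+r \<and> real (k*n) < (1+\<epsilon>) * real (p^y)}"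
  define D where "D = {n. f43 (k*n+r) \<noteq> - f43 n}"
  have DE: "D \<subseteq> {..<p^j} \<union> E" unfolding D_def E_def by (rule bad_incl[OF k r ij])
  define C where "C = real (p^j) + 4 * ln 6 + 2"
  obtain N1 :: nat where N1: "4 * C / \<delta> < real N1" using reals_Archimedean2 by blast
  have d16: "\<delta>/16 > 0" using d by simp
  obtain N2 where N2: "\<forall>N\<ge>N2. norm (ln (real N) / real N - 0) < \<delta>/16"
    using LIMSEQ_D[OF lim_ln_over_n d16] by blast
  show "\<exists>N0. \<forall>N\<ge>N0. real (card (D \<inter> {..<N})) \<le> \<delta> * real N"
  proof (intro exI allI impI)
    fix N assume N: "N \<ge> max (max N1 N2) 1"
    have Npos: "real N \<ge> 1" using N by simp
    have "card (D \<inter> {..<N}) \<le> card (({..<p^j} \<union> E) \<inter> {..<N})"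
      by (rule card_mono) (use DE in auto)
    also have "\<dots> \<le> card ({..<p^j} \<inter> {..<N}) + card (E \<inter> {..<N})"
      by (metis Int_Un_distrib2 card_Un_le)
    also have "card ({..<p^j} \<inter> {..<N}) \<le> p^j" by (metis card_lessThan card_mono finite_lessThan inf_le1)
    finally have c1n: "card (D \<inter> {..<N}) \<le> p^j + card (E \<inter> {..<N})" by simp
    have c1: "real (card (D \<inter> {..<N})) \<le> real (p^j) + real (card (E \<inter> {..<N}))"
      using of_nat_mono[where 'a=real, OF c1n] by simp
    have c2: "real (card (E \<inter> {..<N})) \<le> 2 * \<epsilon> * real (k*N+k) + 2 * (2 * ln (real (k*N+k)) + 1)"
      unfolding E_def using count_E[OF k r] e by simp
    have "2 * \<epsilon> * real (k*N+k) = \<delta> * (real N + 1) / 4" unfolding \<epsilon>_def using k2 by (simp add: field_simps)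
    also have "\<dots> \<le> \<delta> * real N / 2" using Npos d by (simp add: field_simps)
    finally have c3: "2 * \<epsilon> * real (k*N+k) \<le> \<delta> * real N / 2" .
    have "real (k*N+k) \<le> 6 * real N" using k2 Npos
    proof -
      have "real (k*N+k) = real k * (real N + 1)" by (simp add: algebra_simps)
      also have "\<dots> \<le> 3 * (2 * real N)" using k2 Npos by (intro mult_mono) auto
      finally show ?thesis by simp
    qed
    moreover have "k*N+k > 0" using k2 by simp
    then have "real (k*N+k) > 0" by (simp only: of_nat_0_less_iff)
    ultimately have "ln (real (k*N+k)) \<le> ln (6 * real N)" by simp
    also have "\<dots> = ln 6 + ln (real N)" using Npos by (simp add: ln_mult)
    finally have c4: "ln (real (k*N+k)) \<le> ln 6 + ln (real N)" .
    have "ln (real N) / real N < \<delta>/16" using N2 N by auto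
    then have c5: "ln (real N) \<le> \<delta> * real N / 16" using Npos by (simp add: field_simps)
    have "C < \<delta> * real N1 / 4" using N1 d by (simp add: field_simps)
    also have "\<dots> \<le> \<delta> * real N / 4" using N d by (simp add: field_simps)
    finally have c6: "C \<le> \<delta> * real N / 4" by simp
    show "real (card (D \<inter> {..<N})) \<le> \<delta> * real N"
      by (rule arith_aux[OF c1 c2 c3 c4 c5 c6[unfolded C_def]])
  qed
qed


lemma kernel_elem:
  assumes k: "kp k p"
  shows "r < k^a \<Longrightarrow> asym_eq (\<lambda>n. f43 (k^a*n + r)) (\<lambda>n. (-1)^a * f43 n)"
proof (induction a arbitrary: r)
  case 0
  then show ?case by (simp add: asym_refl)
next
  case (Suc a)
  define b where "b = r div k^a"
  define r' where "r' = r mod k^a"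
  have kpos: "k > 0" using kp_ge[OF k] by simp
  have rr: "r = k^a * b + r'" unfolding b_def r'_def by simp
  have r'lt: "r' < k^a" unfolding r'_def using kpos by simp
  have blt: "b < k" unfolding b_def using Suc.prems kpos
    by (simp add: less_mult_imp_div_less mult.commute)
  define G where "G = (\<lambda>m. f43 (k^a*m + r'))"
  have IH: "negl {m. G m \<noteq> (-1)^a * f43 m}"
    using Suc.IH[OF r'lt] unfolding asym_eq_negl G_def .
  have S1: "negl {n. k*n+b \<in> {m. G m \<noteq> (-1)^a * f43 m}}"
    by (rule negl_preimage[OF IH]) (use kpos in simp)
  have S2: "negl {n. f43 (k*n+b) \<noteq> - f43 n}" by (rule main[OF k blt])
  have eq: "k^Suc a * n + r = k^a * (k*n+b) + r'" for n
    unfolding rr by (simp add: algebra_simps)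
  have "{n. f43 (k^Suc a*n + r) \<noteq> (-1)^Suc a * f43 n} \<subseteq>
        {n. k*n+b \<in> {m. G m \<noteq> (-1)^a * f43 m}} \<union> {n. f43 (k*n+b) \<noteq> - f43 n}"
    unfolding eq G_def by auto
  then show ?case unfolding asym_eq_negl using negl_subset negl_Un S1 S2 by blast
qed

lemma automatic_kp:
  assumes k: "kp k p"
  shows "asym_automatic k f43"
proof -
  define R where "R = {(g :: nat \<Rightarrow> int, h). asym_eq g h}"
  have cls: "R `` {g} = R `` {F}" if "asym_eq g F" for g F
  proof -
    have "asym_eq g h \<longleftrightarrow> asym_eq F h" for h
      using that asym_sym asym_trans by blast
    then show ?thesis unfolding R_def by auto
  qed
  have "kernel k f43 // R \<subseteq> {R `` {f43}, R `` {(\<lambda>n. - f43 n)}}"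
  proof
    fix X assume "X \<in> kernel k f43 // R"
    then obtain g where g: "g \<in> kernel k f43" "X = R `` {g}" unfolding quotient_def by blast
    then obtain a r where ar: "r < k^a" "g = (\<lambda>n. f43 (k^a*n + r))" unfolding kernel_def by blast
    have ae: "asym_eq g (\<lambda>n. (-1)^a * f43 n)" using kernel_elem[OF k ar(1)] ar(2) by simp
    show "X \<in> {R `` {f43}, R `` {(\<lambda>n. - f43 n)}}"
    proof (cases "even a")
      case True
      then have "(\<lambda>n. (-1)^a * f43 n) = f43" by simp
      then show ?thesis using cls[OF ae] g by simp
    next
      case False
      then have "(\<lambda>n. (-1)^a * f43 n) = (\<lambda>n. - f43 n)" by simp
      then show ?thesis using cls[OF ae] g by simp
    qed
  qed
  then have "finite (kernel k f43 // R)" by (rule finite_subset) simp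
  then show ?thesis unfolding asym_automatic_def R_def by simp
qed

theorem proposition4p3:
  shows "asym_automatic 2 f43 \<and> asym_automatic 3 f43"
  using automatic_kp[of 2 3] automatic_kp[of 3 2] by (simp add: kp_def)

end
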